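(* Let $f,g\in\mathbb{C}[X,Y]$ be quasi-convenient polynomials of positive degree. Then (1) $\nu_\infty(f,g)\ge 0$; (2) $\nu_\infty(f,g)=0$ if and only if $\Delta_\infty(f)$ and $\Delta_\infty(g)$ are both segments contained in one and the same straight line passing through the origin.
   Context: Write $f=\sum c_{\alpha\beta}X^\alpha Y^\beta\in\mathbb{C}[X,Y]$ and $\operatorname{supp} f=\{(\alpha,\beta)\in\mathbb{N}^2: c_{\alpha\beta}\neq 0\}$. A nonzero polynomial $f$ of positive degree is quasi-convenient if $c_{\alpha 0}\neq 0$ and $c_{0\beta}\neq 0$ for some integers $\alpha,\beta\ge 0$. The Newton diagram at infinity of $f$ is $\Delta_\infty(f)=\operatorname{conv}(\{(0,0)\}\cup\operatorname{supp} f)\subset\mathbb{R}^2$. For quasi-convenient $f,g$ define $\nu_\infty(f,g)=\operatorname{Area}\Delta_\infty(fg)-\operatorname{Area}\Delta_\infty(f)-\operatorname{Area}\Delta_\infty(g)$, where Area denotes two-dimensional Lebesgue measure. *)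

theory Defs
  imports "HOL-Analysis.Analysis" "HOL-Computational_Algebra.Polynomial"
begin

text \<open>A polynomial in C[X,Y] is represented as a polynomial in Y whose coefficients
are polynomials in X: the coefficient of X^a Y^b in f is coeff (coeff f b) a.\<close>

type_synonym cpoly2 = "complex poly poly"

definition cf2 :: "cpoly2 \<Rightarrow> nat \<Rightarrow> nat \<Rightarrow> complex" where
  "cf2 f a b = coeff (coeff f b) a"

definition supp2 :: "cpoly2 \<Rightarrow> (nat \<times> nat) set" where
  "supp2 f = {(a, b). cf2 f a b \<noteq> 0}"

definition pos_degree2 :: "cpoly2 \<Rightarrow> bool" where
  "pos_degree2 f \<longleftrightarrow> (\<exists>(a, b) \<in> supp2 f. a + b > 0)"

definition quasi_convenient :: "cpoly2 \<Rightarrow> bool" where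
  "quasi_convenient f \<longleftrightarrow> f \<noteq> 0 \<and> pos_degree2 f \<and>
     (\<exists>a. cf2 f a 0 \<noteq> 0) \<and> (\<exists>b. cf2 f 0 b \<noteq> 0)"

definition newton_inf :: "cpoly2 \<Rightarrow> (real \<times> real) set" where
  "newton_inf f = convex hull (insert (0, 0) ((\<lambda>(a, b). (real a, real b)) ` supp2 f))"

definition area :: "(real \<times> real) set \<Rightarrow> real" where
  "area S = measure lborel S"

definition nu_inf :: "cpoly2 \<Rightarrow> cpoly2 \<Rightarrow> real" where
  "nu_inf f g = area (newton_inf (f * g)) - area (newton_inf f) - area (newton_inf g)"

end

theory Submission
  imports Defs
begin


lemma cf2_mult: "cf2 (f*g) m n = (\<Sum>j\<le>n. \<Sum>i\<le>m. cf2 f i j * cf2 g (m-i) (n-j))"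
  unfolding cf2_def by (simp add: coeff_mult coeff_sum)

lemma finite_supp2: "finite (supp2 f)"
proof -
  define K where "K = (\<Sum>b\<le>degree f. degree (coeff f b))"
  have "supp2 f \<subseteq> {..K} \<times> {..degree f}"
  proof
    fix x assume "x \<in> supp2 f"
    then obtain a b where x: "x = (a,b)" and c: "coeff (coeff f b) a \<noteq> 0"
      by (auto simp: supp2_def cf2_def)
    have "coeff f b \<noteq> 0" using c by auto
    hence b: "b \<le> degree f" by (meson le_degree)
    have "a \<le> degree (coeff f b)" using c by (meson le_degree)
    also have "\<dots> \<le> K" unfolding K_def
      by (rule member_le_sum) (use b in auto)
    finally show "x \<in> {..K} \<times> {..degree f}" using b x by auto
  qed
  thus ?thesis by (rule finite_subset) auto
qed

lemma supp2_mult_sub: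
  assumes "(m,n) \<in> supp2 (f*g)"
  shows "\<exists>i j. i \<le> m \<and> j \<le> n \<and> (i,j) \<in> supp2 f \<and> (m-i,n-j) \<in> supp2 g"
proof (rule ccontr)
  assume "\<not> ?thesis"
  hence "\<And>i j. i \<le> m \<Longrightarrow> j \<le> n \<Longrightarrow> cf2 f i j * cf2 g (m-i) (n-j) = 0"
    by (auto simp: supp2_def)
  hence "cf2 (f*g) m n = 0" by (auto simp: cf2_mult intro!: sum.neutral)
  thus False using assms by (simp add: supp2_def)
qed



lemma exists_top:
  fixes W :: "nat \<times> nat \<Rightarrow> real"
  assumes "finite S" "S \<noteq> {}"
  shows "\<exists>t\<in>S. (\<forall>x\<in>S. W x \<le> W t) \<and>
     (\<forall>x\<in>S. W x = W t \<longrightarrow> fst x \<le> fst t \<and> (fst x = fst t \<longrightarrow> snd x \<le> snd t))"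
proof -
  define Wm where "Wm = Max (W ` S)"
  define M1 where "M1 = {x\<in>S. W x = Wm}"
  have "Wm \<in> W ` S" unfolding Wm_def using assms by (intro Max_in) auto
  hence M1: "finite M1" "M1 \<noteq> {}" using assms unfolding M1_def by auto
  define k1 where "k1 = Max (fst ` M1)"
  define M2 where "M2 = {x\<in>M1. fst x = k1}"
  have "k1 \<in> fst ` M1" unfolding k1_def using M1 by (intro Max_in) auto
  hence M2: "finite M2" "M2 \<noteq> {}" using M1 unfolding M2_def by auto
  define k2 where "k2 = Max (snd ` M2)"
  have "k2 \<in> snd ` M2" unfolding k2_def using M2 by (intro Max_in) auto
  then obtain t where t: "t \<in> M2" "snd t = k2" by auto
  have tS: "t \<in> S" and Wt: "W t = Wm" and ft: "fst t = k1" using t unfolding M2_def M1_def by auto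
  show ?thesis
  proof (intro bexI[OF _ tS] conjI ballI impI)
    fix x assume "x \<in> S" thus "W x \<le> W t" unfolding Wt Wm_def using assms by auto
  next
    fix x assume x: "x \<in> S" "W x = W t"
    hence xM1: "x \<in> M1" unfolding M1_def Wt by auto
    thus "fst x \<le> fst t" unfolding ft k1_def using M1 by auto
    assume "fst x = fst t"
    hence "x \<in> M2" using xM1 ft unfolding M2_def by auto
    thus "snd x \<le> snd t" unfolding t k2_def using M2 by auto
  qed
qed

lemma supp2_nonempty: "f \<noteq> 0 \<Longrightarrow> supp2 f \<noteq> {}"
proof -
  assume "f \<noteq> 0"
  then obtain b where "coeff f b \<noteq> 0" by (meson leading_coeff_neq_0)
  then obtain a where "coeff (coeff f b) a \<noteq> 0" by (meson leading_coeff_neq_0)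
  thus ?thesis by (auto simp: supp2_def cf2_def)
qed

definition emb :: "nat \<times> nat \<Rightarrow> real \<times> real" where
  "emb x = (real (fst x), real (snd x))"

lemma newton_inf_emb: "newton_inf h = convex hull (insert 0 (emb ` supp2 h))"
proof -
  have "(\<lambda>(a, b). (real a, real b)) = emb" by (auto simp: emb_def fun_eq_iff)
  thus ?thesis unfolding newton_inf_def zero_prod_def by simp
qed

lemma newton_sum_sub:
  assumes p: "p \<in> supp2 f" and q: "q \<in> supp2 g"
  shows "emb (fst p + fst q, snd p + snd q) \<in> newton_inf (f*g)"
proof (rule ccontr)
  let ?D = "newton_inf (f*g)"
  let ?z = "emb (fst p + fst q, snd p + snd q)"
  assume zD: "?z \<notin> ?D"
  have "compact ?D" unfolding newton_inf_emb
    by (intro finite_imp_compact_convex_hull) (auto intro: finite_supp2)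
  moreover have "convex ?D" unfolding newton_inf_emb by simp
  ultimately obtain a b where ab: "inner a ?z < b" "\<forall>x\<in>?D. b < inner a x"
    using separating_hyperplane_closed_point[of ?D ?z] zD compact_imp_closed by blast
  define W :: "nat \<times> nat \<Rightarrow> real" where "W x = - (fst a * real (fst x) + snd a * real (snd x))" for x
  have Wemb: "W x = - inner a (emb x)" for x
    by (cases a) (simp add: W_def emb_def)
  have Wfg: "W x < - b" if "x \<in> supp2 (f*g)" for x
  proof -
    have "emb x \<in> ?D" unfolding newton_inf_emb using that by (intro hull_inc) auto
    hence "b < inner a (emb x)" using ab(2) by blast
    thus ?thesis unfolding Wemb by linarith
  qed
  have Wadd: "W (fst x + fst y, snd x + snd y) = W x + W y" for x y
    by (simp add: W_def algebra_simps)
  have Wz: "W p + W q > - b" using ab(1) Wemb[of "(fst p + fst q, snd p + snd q)"] Wadd by simp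
  have "f \<noteq> 0" using p by (auto simp: supp2_def cf2_def)
  have "g \<noteq> 0" using q by (auto simp: supp2_def cf2_def)
  obtain ta where ta: "ta \<in> supp2 f" "\<forall>x\<in>supp2 f. W x \<le> W ta"
    "\<forall>x\<in>supp2 f. W x = W ta \<longrightarrow> fst x \<le> fst ta \<and> (fst x = fst ta \<longrightarrow> snd x \<le> snd ta)"
    using exists_top[OF finite_supp2 supp2_nonempty[OF \<open>f \<noteq> 0\<close>], of W] by blast
  obtain tb where tb: "tb \<in> supp2 g" "\<forall>x\<in>supp2 g. W x \<le> W tb"
    "\<forall>x\<in>supp2 g. W x = W tb \<longrightarrow> fst x \<le> fst tb \<and> (fst x = fst tb \<longrightarrow> snd x \<le> snd tb)"
    using exists_top[OF finite_supp2 supp2_nonempty[OF \<open>g \<noteq> 0\<close>], of W] by blast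
  define m where "m = fst ta + fst tb"
  define n where "n = snd ta + snd tb"
  have key: "(i,j) = ta" if ij: "i \<le> m" "j \<le> n" "(i,j) \<in> supp2 f" "(m-i,n-j) \<in> supp2 g" for i j
  proof -
    have 1: "W (i,j) \<le> W ta" using ta(2) ij by auto
    have 2: "W (m-i,n-j) \<le> W tb" using tb(2) ij by auto
    have 3: "W (i,j) + W (m-i,n-j) = W ta + W tb"
      using ij unfolding W_def m_def n_def by (simp add: of_nat_diff algebra_simps)
    have e1: "W (i,j) = W ta" and e2: "W (m-i,n-j) = W tb" using 1 2 3 by linarith+
    have i1: "i \<le> fst ta" using ta(3) e1 ij(3) by fastforce
    have i2: "m - i \<le> fst tb" using tb(3) e2 ij(4) by fastforce
    have i: "i = fst ta" using i1 i2 ij(1) unfolding m_def by linarith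
    have "j \<le> snd ta" using ta(3) e1 ij(3) i by fastforce
    moreover have "m - i = fst tb" using i unfolding m_def by simp
    hence "n - j \<le> snd tb" using tb(3) e2 ij(4) by fastforce
    ultimately have "j = snd ta" unfolding n_def by linarith
    thus ?thesis using i by (simp add: prod_eq_iff)
  qed
  have "cf2 (f*g) m n = (\<Sum>j\<le>n. \<Sum>i\<le>m. if j = snd ta then (if i = fst ta then cf2 f (fst ta) (snd ta) * cf2 g (m - fst ta) (n - snd ta) else 0) else 0)"
    unfolding cf2_mult
  proof (intro sum.cong refl)
    fix j i assume "j \<in> {..n}" "i \<in> {..m}"
    thus "cf2 f i j * cf2 g (m - i) (n - j) = (if j = snd ta then (if i = fst ta then cf2 f (fst ta) (snd ta) * cf2 g (m - fst ta) (n - snd ta) else 0) else 0)"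
    proof (cases "i = fst ta \<and> j = snd ta")
      case True then show ?thesis by simp
    next
      case False
      hence "(i,j) \<noteq> ta" by auto
      hence "cf2 f i j * cf2 g (m - i) (n - j) = 0" using key[of i j] \<open>j \<in> {..n}\<close> \<open>i \<in> {..m}\<close>
        unfolding supp2_def by auto
      then show ?thesis using False by auto
    qed
  qed
  also have "\<dots> = cf2 f (fst ta) (snd ta) * cf2 g (fst tb) (snd tb)"
  proof -
    let ?C = "cf2 f (fst ta) (snd ta) * cf2 g (m - fst ta) (n - snd ta)"
    have "(\<Sum>i\<le>m. if j = snd ta then (if i = fst ta then ?C else 0) else 0) = (if j = snd ta then ?C else 0)" for j
      by (cases "j = snd ta") (auto simp: m_def)
    hence "(\<Sum>j\<le>n. \<Sum>i\<le>m. if j = snd ta then (if i = fst ta then ?C else 0) else 0) = (\<Sum>j\<le>n. if j = snd ta then ?C else 0)"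
      by simp
    also have "\<dots> = ?C" by (simp add: n_def)
    finally show ?thesis by (simp add: m_def n_def)
  qed
  also have "\<dots> \<noteq> 0" using ta(1) tb(1) by (auto simp: supp2_def)
  finally have "(m,n) \<in> supp2 (f*g)" by (simp add: supp2_def)
  hence "W (m,n) < -b" by (rule Wfg)
  moreover have "W (m,n) = W ta + W tb" unfolding m_def n_def by (rule Wadd)
  moreover have "W p \<le> W ta" "W q \<le> W tb" using ta(2) tb(2) p q by auto
  ultimately show False using Wz by linarith
qed



lemma emb_add: "emb (fst p + fst q, snd p + snd q) = emb p + emb q"
  by (simp add: emb_def)

lemma newton_pf_sub:
  assumes g: "quasi_convenient g" and p: "p \<in> supp2 f"
  shows "emb p \<in> newton_inf (f*g)"
proof -
  let ?D = "newton_inf (f*g)"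
  obtain \<alpha> where a: "(\<alpha>,0) \<in> supp2 g" using g unfolding quasi_convenient_def supp2_def by auto
  obtain \<beta> where b: "(0,\<beta>) \<in> supp2 g" using g unfolding quasi_convenient_def supp2_def by auto
  have u: "emb (fst p + \<alpha>, snd p) \<in> ?D" using newton_sum_sub[OF p a] by simp
  have v: "emb (fst p, snd p + \<beta>) \<in> ?D" using newton_sum_sub[OF p b] by simp
  have cD: "convex ?D" by (simp add: newton_inf_emb)
  have 0: "0 \<in> ?D" unfolding newton_inf_emb by (intro hull_inc) auto
  show ?thesis
  proof (cases "\<alpha> = 0 \<or> \<beta> = 0")
    case True thus ?thesis using u v by auto
  next
    case False
    define x where "x = real (fst p)"
    define y where "y = real (snd p)"
    define A where "A = real \<alpha>"
    define B where "B = real \<beta>"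
    have A: "A > 0" and B: "B > 0" using False by (auto simp: A_def B_def)
    have x: "x \<ge> 0" and y: "y \<ge> 0" by (auto simp: x_def y_def)
    define t where "t = x/A + y/B"
    have t: "t \<ge> 0" unfolding t_def using A B x y by auto
    define l where "l = (x/A) / (1+t)"
    define m where "m = (y/B) / (1+t)"
    define k where "k = 1 / (1+t)"
    have nn: "0 \<le> k" "0 \<le> l" "0 \<le> m" using A B x y t by (auto simp: k_def l_def m_def)
    have t1: "1 + t \<noteq> 0" using t by linarith
    have "k + l + m = (1 + x/A + y/B) / (1+t)" unfolding k_def l_def m_def
      by (simp add: add_divide_distrib)
    hence s: "k + l + m = 1" using t1 unfolding t_def by (simp add: add.assoc)
    have lN: "l*(1+t) = x/A" using t1 by (simp add: l_def)
    have mN: "m*(1+t) = y/B" using t1 by (simp add: m_def)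
    have "(l * (x + A) + m * x) * (1+t) = (l*(1+t))*(x+A) + (m*(1+t))*x" by (simp add: algebra_simps)
    also have "\<dots> = x/A*(x+A) + y/B*x" by (simp add: lN mN)
    also have "\<dots> = x * (1 + t)" using A B by (simp add: t_def field_simps)
    finally have "(l * (x + A) + m * x) * (1+t) = x * (1 + t)" .
    hence ex: "x = l * (x + A) + m * x" using t1 by simp
    have "(l * y + m * (y + B)) * (1+t) = (l*(1+t))*y + (m*(1+t))*(y+B)" by (simp add: algebra_simps)
    also have "\<dots> = x/A*y + y/B*(y+B)" by (simp add: lN mN)
    also have "\<dots> = y * (1 + t)" using A B by (simp add: t_def field_simps)
    finally have "(l * y + m * (y + B)) * (1+t) = y * (1 + t)" .
    hence ey: "y = l * y + m * (y + B)" using t1 by simp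
    have "emb p = k *\<^sub>R 0 + l *\<^sub>R emb (fst p + \<alpha>, snd p) + m *\<^sub>R emb (fst p, snd p + \<beta>)"
      using ex ey by (simp add: emb_def x_def y_def A_def B_def)
    hence "emb p \<in> convex hull {0, emb (fst p + \<alpha>, snd p), emb (fst p, snd p + \<beta>)}"
      unfolding convex_hull_3 using nn s by blast
    moreover have "convex hull {0, emb (fst p + \<alpha>, snd p), emb (fst p, snd p + \<beta>)} \<subseteq> ?D"
      using u v 0 cD by (intro hull_minimal) auto
    ultimately show ?thesis by blast
  qed
qed

lemma newton_mult_eq:
  assumes f: "quasi_convenient f" and g: "quasi_convenient g"
  shows "newton_inf (f*g) = newton_inf f + newton_inf g"
proof
  let ?D = "newton_inf (f*g)"
  have cD: "convex ?D" by (simp add: newton_inf_emb)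
  have 0: "0 \<in> ?D" unfolding newton_inf_emb by (intro hull_inc) auto
  have "insert 0 (emb ` supp2 f) + insert 0 (emb ` supp2 g) \<subseteq> ?D"
  proof
    fix z assume "z \<in> insert 0 (emb ` supp2 f) + insert 0 (emb ` supp2 g)"
    then obtain x y where z: "z = x + y" and x: "x \<in> insert 0 (emb ` supp2 f)"
      and y: "y \<in> insert 0 (emb ` supp2 g)" unfolding set_plus_def by blast
    show "z \<in> ?D"
    proof (cases "x = 0")
      case True
      show ?thesis
      proof (cases "y = 0")
        case True thus ?thesis using \<open>x = 0\<close> z 0 by simp
      next
        case False
        then obtain q where "q \<in> supp2 g" "y = emb q" using y by auto
        hence "y \<in> newton_inf (g*f)" using newton_pf_sub[OF f] by auto
        thus ?thesis using z \<open>x = 0\<close> by (simp add: mult.commute)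
      qed
    next
      case False
      then obtain p where p: "p \<in> supp2 f" "x = emb p" using x by auto
      show ?thesis
      proof (cases "y = 0")
        case True thus ?thesis using z p newton_pf_sub[OF g p(1)] by simp
      next
        case False
        then obtain q where "q \<in> supp2 g" "y = emb q" using y by auto
        thus ?thesis using z p newton_sum_sub[OF p(1), of q g] by (simp add: emb_add)
      qed
    qed
  qed
  hence "convex hull (insert 0 (emb ` supp2 f) + insert 0 (emb ` supp2 g)) \<subseteq> ?D"
    using cD by (intro hull_minimal)
  thus "newton_inf f + newton_inf g \<subseteq> ?D"
    by (simp add: newton_inf_emb convex_hull_set_plus)
next
  let ?S = "newton_inf f + newton_inf g"
  let ?D = "newton_inf (f*g)"
  have cS: "convex ?S" by (intro convex_set_plus) (simp_all add: newton_inf_emb)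
  have "insert 0 (emb ` supp2 (f*g)) \<subseteq> ?S"
  proof
    fix z assume "z \<in> insert 0 (emb ` supp2 (f*g))"
    then consider "z = 0" | r where "r \<in> supp2 (f*g)" "z = emb r" by auto
    thus "z \<in> ?S"
    proof cases
      case 1
      have "(0::real\<times>real) \<in> newton_inf f" "(0::real\<times>real) \<in> newton_inf g"
        unfolding newton_inf_emb by (intro hull_inc, simp)+
      hence "(0::real\<times>real) + 0 \<in> ?S" by blast
      thus ?thesis using 1 by simp
    next
      case 2
      obtain m n where r: "r = (m,n)" by (cases r)
      then obtain i j where ij: "i \<le> m" "j \<le> n" "(i,j) \<in> supp2 f" "(m-i,n-j) \<in> supp2 g"
        using supp2_mult_sub 2 by blast
      have "emb (i,j) \<in> newton_inf f" "emb (m-i,n-j) \<in> newton_inf g"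
        unfolding newton_inf_emb using ij by (intro hull_inc, simp)+
      hence "emb (i,j) + emb (m-i,n-j) \<in> ?S" by blast
      moreover have "emb (i,j) + emb (m-i,n-j) = z" using 2 r ij by (simp add: emb_def)
      ultimately show ?thesis by simp
    qed
  qed
  thus "?D \<subseteq> ?S" unfolding newton_inf_emb[of "f*g"] using cS by (intro hull_minimal)
qed



lemma lb_leb: "compact S \<Longrightarrow> measure lborel S = measure lebesgue S"
  by (simp add: borel_compact)

lemma emeas_compact: "compact S \<Longrightarrow> emeasure lborel S = ennreal (measure lebesgue S)"
proof -
  assume S: "compact S"
  hence "S \<in> fmeasurable lborel" by (rule fmeasurable_compact)
  hence "emeasure lborel S \<noteq> top" by (auto simp: fmeasurable_def)
  hence "emeasure lborel S = ennreal (measure lborel S)" by (rule emeasure_eq_ennreal_measure)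
  thus ?thesis using lb_leb[OF S] by simp
qed

lemma compact_set_plus:
  fixes S T :: "'a::real_normed_vector set"
  assumes "compact S" "compact T" shows "compact (S + T)"
proof -
  have "S + T = {x + y | x y. x \<in> S \<and> y \<in> T}" unfolding set_plus_def by blast
  thus ?thesis using compact_sums[OF assms] by simp
qed

lemma sum1d:
  fixes X Y :: "real set"
  assumes X: "compact X" "X \<noteq> {}" and Y: "compact Y" "Y \<noteq> {}"
  shows "measure lebesgue X + measure lebesgue Y \<le> measure lebesgue (X + Y)"
proof -
  obtain m where m: "m \<in> X" "\<forall>x\<in>X. x \<le> m" using compact_attains_sup[OF X] by blast
  obtain n where n: "n \<in> Y" "\<forall>y\<in>Y. n \<le> y" using compact_attains_inf[OF Y] by blast
  define U where "U = (+) n ` X"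
  define V where "V = (+) m ` Y"
  have cU: "compact U" unfolding U_def using X by (intro compact_translation) 
  have cV: "compact V" unfolding V_def using Y by (intro compact_translation)
  have mU: "measure lebesgue U = measure lebesgue X" unfolding U_def by (rule measure_translation)
  have mV: "measure lebesgue V = measure lebesgue Y" unfolding V_def by (rule measure_translation)
  have "U \<inter> V \<subseteq> {m + n}"
  proof
    fix z assume "z \<in> U \<inter> V"
    then obtain x y where "x \<in> X" "y \<in> Y" "z = n + x" "z = m + y" unfolding U_def V_def by auto
    thus "z \<in> {m+n}" using m n by force
  qed
  hence "negligible (U \<inter> V)" by (rule negligible_subset[OF negligible_sing])
  hence 0: "measure lebesgue (U \<inter> V) = 0" by (rule negligible_imp_measure0)
  have "U \<union> V \<subseteq> X + Y"
  proof
    fix z assume "z \<in> U \<union> V"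
    then consider x where "x \<in> X" "z = n + x" | y where "y \<in> Y" "z = m + y"
      unfolding U_def V_def by auto
    thus "z \<in> X + Y"
    proof cases
      case 1 thus ?thesis using n(1) by (metis add.commute set_plus_intro)
    next
      case 2 thus ?thesis using m(1) by (metis set_plus_intro)
    qed
  qed
  moreover have "compact (X + Y)" using X Y by (intro compact_set_plus)
  ultimately have "measure lebesgue (U \<union> V) \<le> measure lebesgue (X + Y)"
    using cU cV by (intro measure_mono_fmeasurable) (auto intro: lmeasurable_compact compact_Un fmeasurableD)
  moreover have "measure lebesgue (U \<union> V) = measure lebesgue U + measure lebesgue V"
    using measure_Un3[of U lebesgue V] cU cV 0 by (simp add: lmeasurable_compact)
  ultimately show ?thesis using mU mV by simp
qed



lemma emeasure_slices:
  fixes S :: "(real \<times> real) set"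
  assumes "closed S"
  shows "emeasure lborel S = (\<integral>\<^sup>+t. emeasure lborel (Pair t -` S) \<partial>lborel)"
proof -
  have "emeasure lborel S = emeasure (lborel \<Otimes>\<^sub>M lborel) S" by (simp add: lborel_prod)
  also have "\<dots> = (\<integral>\<^sup>+t. emeasure lborel (Pair t -` S) \<partial>lborel)"
    by (rule lborel.emeasure_pair_measure_alt) (subst lborel_prod, simp add: borel_closed assms)
  finally show ?thesis .
qed

lemma slice_measurable:
  fixes S :: "(real \<times> real) set"
  assumes "closed S"
  shows "(\<lambda>t. emeasure lborel (Pair t -` S)) \<in> borel_measurable borel"
proof -
  have "S \<in> sets (lborel \<Otimes>\<^sub>M lborel)" by (subst lborel_prod, simp add: borel_closed assms)
  from lborel.measurable_emeasure_Pair[OF this] show ?thesis by simp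
qed

lemma slice_compact:
  fixes S :: "(real \<times> real) set"
  assumes "compact S"
  shows "compact (Pair t -` S)"
proof -
  have e: "Pair t -` S = snd ` (S \<inter> ({t} \<times> UNIV))" by force
  have "compact (S \<inter> ({t} \<times> UNIV))"
    using assms by (intro compact_Int_closed closed_Times) auto
  hence "compact (snd ` (S \<inter> ({t} \<times> UNIV)))"
    by (rule compact_continuous_image[rotated]) (intro continuous_intros)
  thus ?thesis using e by simp
qed

lemma slice_sum: "(Pair t -` A) + (Pair r -` B) \<subseteq> Pair (t+r) -` (A + B)"
proof
  fix z assume "z \<in> (Pair t -` A) + (Pair r -` B)"
  then obtain y1 y2 where "(t,y1) \<in> A" "(r,y2) \<in> B" "z = y1 + y2" unfolding set_plus_def by auto
  hence "(t,y1) + (r,y2) \<in> A + B" by blast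
  thus "z \<in> Pair (t+r) -` (A + B)" using \<open>z = y1 + y2\<close> by simp
qed

lemma slice_nonempty:
  fixes A :: "(real \<times> real) set"
  assumes "convex A" "p \<in> A" "q \<in> A" "fst p \<le> t" "t \<le> fst q"
  shows "Pair t -` A \<noteq> {}"
proof (cases "fst p = fst q")
  case True
  hence "t = fst p" using assms by auto
  hence "p = (t, snd p)" by simp
  thus ?thesis using assms(2) by (metis empty_iff vimage_eq)
next
  case False
  hence d: "fst q - fst p > 0" using assms by auto
  define th where "th = (t - fst p) / (fst q - fst p)"
  have th: "0 \<le> th" "th \<le> 1" using assms d by (auto simp: th_def field_simps)
  define z where "z = (1 - th) *\<^sub>R p + th *\<^sub>R q"
  have "z \<in> A" unfolding z_def using th assms by (intro convexD) auto
  moreover have "fst z = fst p + th * (fst q - fst p)" by (simp add: z_def algebra_simps)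
  moreover have "th * (fst q - fst p) = t - fst p" unfolding th_def using d by simp
  ultimately have "z \<in> A" "fst z = t" by auto
  hence "(t, snd z) \<in> A" by (metis prod.collapse)
  thus ?thesis by auto
qed

lemma slice_empty:
  fixes A :: "(real \<times> real) set"
  assumes "\<forall>x\<in>A. a1 \<le> fst x \<and> fst x \<le> a2" "t < a1 \<or> a2 < t"
  shows "Pair t -` A = {}"
  using assms by force



lemma slice_integral_affine:
  fixes A :: "(real \<times> real) set"
  assumes A: "compact A" and bnd: "\<forall>x\<in>A. a1 \<le> fst x \<and> fst x \<le> a1 + d" and d: "d > 0"
  shows "emeasure lborel A = ennreal d *
     (\<integral>\<^sup>+l. indicator {0..1} l * emeasure lborel (Pair (a1 + d * l) -` A) \<partial>lborel)"
proof -
  have m[measurable]: "(\<lambda>t. emeasure lborel (Pair t -` A)) \<in> borel_measurable borel"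
    using slice_measurable[OF compact_imp_closed[OF A]] .
  have "emeasure lborel A = (\<integral>\<^sup>+t. emeasure lborel (Pair t -` A) \<partial>lborel)"
    by (rule emeasure_slices[OF compact_imp_closed[OF A]])
  also have "\<dots> = ennreal \<bar>d\<bar> * (\<integral>\<^sup>+l. emeasure lborel (Pair (a1 + d * l) -` A) \<partial>lborel)"
    by (rule nn_integral_real_affine[OF m]) (use d in simp)
  also have "(\<integral>\<^sup>+l. emeasure lborel (Pair (a1 + d * l) -` A) \<partial>lborel) =
      (\<integral>\<^sup>+l. indicator {0..1} l * emeasure lborel (Pair (a1 + d * l) -` A) \<partial>lborel)"
  proof (intro nn_integral_cong)
    fix l :: real
    show "emeasure lborel (Pair (a1 + d * l) -` A) = indicator {0..1} l * emeasure lborel (Pair (a1 + d * l) -` A)"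
    proof (cases "l \<in> {0..1}")
      case True thus ?thesis by simp
    next
      case False
      hence "l < 0 \<or> 1 < l" by auto
      hence "a1 + d * l < a1 \<or> a1 + d < a1 + d * l" using d by (auto simp: mult_less_0_iff)
      hence "Pair (a1 + d * l) -` A = {}" using bnd by (intro slice_empty) auto
      thus ?thesis by simp
    qed
  qed
  finally show ?thesis using d by simp
qed

lemma fubini_bound:
  fixes A B :: "(real \<times> real) set"
  assumes A: "compact A" "convex A" and B: "compact B" "convex B"
    and pa: "pa \<in> A" "qa \<in> A" "\<forall>x\<in>A. fst pa \<le> fst x \<and> fst x \<le> fst qa" "fst pa < fst qa"
    and pb: "pb \<in> B" "qb \<in> B" "\<forall>x\<in>B. fst pb \<le> fst x \<and> fst x \<le> fst qb" "fst pb < fst qb"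
  shows "ennreal ((fst qa - fst pa + (fst qb - fst pb)) / (fst qa - fst pa)) * emeasure lborel A
       + ennreal ((fst qa - fst pa + (fst qb - fst pb)) / (fst qb - fst pb)) * emeasure lborel B
       \<le> emeasure lborel (A + B)"
proof -
  define a1 where "a1 = fst pa"
  define b1 where "b1 = fst pb"
  define da where "da = fst qa - fst pa"
  define db where "db = fst qb - fst pb"
  have da: "da > 0" and db: "db > 0" using pa(4) pb(4) by (auto simp: da_def db_def)
  define LA where "LA l = indicator {0..1} l * emeasure lborel (Pair (a1 + da * l) -` A)" for l
  define LB where "LB l = indicator {0..1} l * emeasure lborel (Pair (b1 + db * l) -` B)" for l
  have cS: "compact (A + B)" using A B by (intro compact_set_plus) auto
  have mA[measurable]: "(\<lambda>t. emeasure lborel (Pair t -` A)) \<in> borel_measurable borel"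
    using slice_measurable[OF compact_imp_closed[OF A(1)]] .
  have mB[measurable]: "(\<lambda>t. emeasure lborel (Pair t -` B)) \<in> borel_measurable borel"
    using slice_measurable[OF compact_imp_closed[OF B(1)]] .
  have mS[measurable]: "(\<lambda>t. emeasure lborel (Pair t -` (A + B))) \<in> borel_measurable borel"
    using slice_measurable[OF compact_imp_closed[OF cS]] .
  have mLA[measurable]: "LA \<in> borel_measurable borel" unfolding LA_def by measurable
  have mLB[measurable]: "LB \<in> borel_measurable borel" unfolding LB_def by measurable
  have eA: "emeasure lborel A = ennreal da * integral\<^sup>N lborel LA"
    unfolding LA_def a1_def da_def using pa A by (intro slice_integral_affine) auto
  have eB: "emeasure lborel B = ennreal db * integral\<^sup>N lborel LB"
    unfolding LB_def b1_def db_def using pb B by (intro slice_integral_affine) auto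
  have "emeasure lborel (A + B) = (\<integral>\<^sup>+t. emeasure lborel (Pair t -` (A + B)) \<partial>lborel)"
    by (rule emeasure_slices[OF compact_imp_closed[OF cS]])
  also have "\<dots> = ennreal \<bar>da + db\<bar> * (\<integral>\<^sup>+l. emeasure lborel (Pair (a1 + b1 + (da + db) * l) -` (A + B)) \<partial>lborel)"
    by (rule nn_integral_real_affine[OF mS]) (use da db in simp)
  finally have e1: "emeasure lborel (A + B) = ennreal \<bar>da + db\<bar> * (\<integral>\<^sup>+l. emeasure lborel (Pair (a1 + b1 + (da + db) * l) -` (A + B)) \<partial>lborel)" .
  have e2: "(\<integral>\<^sup>+l. emeasure lborel (Pair (a1 + b1 + (da + db) * l) -` (A + B)) \<partial>lborel)
      \<ge> (\<integral>\<^sup>+l. LA l + LB l \<partial>lborel)"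
  proof (intro nn_integral_mono)
    fix l :: real
    show "LA l + LB l \<le> emeasure lborel (Pair (a1 + b1 + (da + db) * l) -` (A + B))"
    proof (cases "l \<in> {0..1}")
      case False thus ?thesis by (simp add: LA_def LB_def)
    next
      case True
      let ?t = "a1 + da * l" and ?r = "b1 + db * l"
      have dl: "0 \<le> da*l" "da*l \<le> da" using True da by (auto intro: mult_left_le)
      have dl': "0 \<le> db*l" "db*l \<le> db" using True db by (auto intro: mult_left_le)
      have t: "fst pa \<le> ?t" "?t \<le> fst qa" using dl unfolding a1_def da_def by auto
      have r: "fst pb \<le> ?r" "?r \<le> fst qb" using dl' unfolding b1_def db_def by auto
      have neA: "Pair ?t -` A \<noteq> {}" using slice_nonempty[OF A(2) pa(1,2) t] .
      have neB: "Pair ?r -` B \<noteq> {}" using slice_nonempty[OF B(2) pb(1,2) r] .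
      have cA: "compact (Pair ?t -` A)" using slice_compact[OF A(1)] .
      have cB: "compact (Pair ?r -` B)" using slice_compact[OF B(1)] .
      have cAB: "compact (Pair (?t + ?r) -` (A + B))" using slice_compact[OF cS] .
      have cs: "compact (Pair ?t -` A + Pair ?r -` B)" using cA cB by (rule compact_set_plus)
      have "measure lebesgue (Pair ?t -` A) + measure lebesgue (Pair ?r -` B)
          \<le> measure lebesgue (Pair ?t -` A + Pair ?r -` B)"
        using sum1d[OF cA neA cB neB] .
      also have "\<dots> \<le> measure lebesgue (Pair (?t + ?r) -` (A + B))"
        using slice_sum[of ?t A ?r B] cs cAB
        by (intro measure_mono_fmeasurable) (auto intro: lmeasurable_compact fmeasurableD)
      finally have ineq: "measure lebesgue (Pair ?t -` A) + measure lebesgue (Pair ?r -` B)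
          \<le> measure lebesgue (Pair (?t + ?r) -` (A + B))" .
      have "LA l + LB l = ennreal (measure lebesgue (Pair ?t -` A)) + ennreal (measure lebesgue (Pair ?r -` B))"
        using True by (simp add: LA_def LB_def emeas_compact[OF cA] emeas_compact[OF cB])
      also have "\<dots> = ennreal (measure lebesgue (Pair ?t -` A) + measure lebesgue (Pair ?r -` B))"
        by (simp add: ennreal_plus)
      also have "\<dots> \<le> ennreal (measure lebesgue (Pair (?t + ?r) -` (A + B)))"
        using ineq by (rule ennreal_leI)
      also have "\<dots> = emeasure lborel (Pair (?t + ?r) -` (A + B))" by (simp add: emeas_compact[OF cAB])
      also have "?t + ?r = a1 + b1 + (da + db) * l" by (simp add: algebra_simps)
      finally show ?thesis .
    qed
  qed
  have e3: "(\<integral>\<^sup>+l. LA l + LB l \<partial>lborel) = integral\<^sup>N lborel LA + integral\<^sup>N lborel LB"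
    by (rule nn_integral_add) auto
  have main: "ennreal (da + db) * (integral\<^sup>N lborel LA + integral\<^sup>N lborel LB) \<le> emeasure lborel (A + B)"
    unfolding e1 using da db e2 e3 by (simp add: mult_left_mono)
  have "ennreal ((da + db) / da) * emeasure lborel A = ennreal (da + db) * integral\<^sup>N lborel LA"
    using da db by (simp add: eA mult.assoc[symmetric] ennreal_mult[symmetric])
  moreover have "ennreal ((da + db) / db) * emeasure lborel B = ennreal (da + db) * integral\<^sup>N lborel LB"
    using da db by (simp add: eB mult.assoc[symmetric] ennreal_mult[symmetric])
  ultimately show ?thesis using main unfolding da_def db_def by (simp add: distrib_left)
qed



lemma strict_x:
  fixes A B :: "(real \<times> real) set"
  assumes A: "compact A" "convex A" "0 \<in> A" and B: "compact B" "convex B" "0 \<in> B"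
    and mA: "measure lebesgue A > 0" and b: "b \<in> B" "fst b \<noteq> 0"
  shows "measure lebesgue A + measure lebesgue B < measure lebesgue (A + B)"
proof -
  have cf: "continuous_on S fst" for S :: "(real \<times> real) set" by (intro continuous_intros)
  obtain pa where pa: "pa \<in> A" "\<forall>y\<in>A. fst pa \<le> fst y"
    using continuous_attains_inf[OF A(1) _ cf] A(3) by blast
  obtain qa where qa: "qa \<in> A" "\<forall>y\<in>A. fst y \<le> fst qa"
    using continuous_attains_sup[OF A(1) _ cf] A(3) by blast
  obtain pb where pb: "pb \<in> B" "\<forall>y\<in>B. fst pb \<le> fst y"
    using continuous_attains_inf[OF B(1) _ cf] B(3) by blast
  obtain qb where qb: "qb \<in> B" "\<forall>y\<in>B. fst y \<le> fst qb"
    using continuous_attains_sup[OF B(1) _ cf] B(3) by blast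
  have ltA: "fst pa < fst qa"
  proof (rule ccontr)
    assume "\<not> fst pa < fst qa"
    hence "A \<subseteq> {x. inner (1::real, 0::real) x = fst pa}" using pa qa by force
    moreover have "negligible {x. inner (1::real, 0::real) x = fst pa}"
      by (rule negligible_hyperplane) (simp add: zero_prod_def)
    ultimately have "negligible A" using negligible_subset by blast
    thus False using mA negligible_imp_measure0 by force
  qed
  have ltB: "fst pb < fst qb"
  proof -
    have "fst pb \<le> 0" "0 \<le> fst qb" using pb qb B(3) by force+
    moreover have "fst pb \<le> fst b" "fst b \<le> fst qb" using pb qb b by auto
    ultimately show ?thesis using b(2) by linarith
  qed
  define da where "da = fst qa - fst pa"
  define db where "db = fst qb - fst pb"
  have da: "da > 0" and db: "db > 0" using ltA ltB by (auto simp: da_def db_def)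
  have cS: "compact (A + B)" using A B by (intro compact_set_plus) auto
  have F: "ennreal ((da + db) / da) * emeasure lborel A + ennreal ((da + db) / db) * emeasure lborel B
       \<le> emeasure lborel (A + B)"
    unfolding da_def db_def using pa qa pb qb ltA ltB A B by (intro fubini_bound) auto
  define mA' where "mA' = measure lebesgue A"
  define mB' where "mB' = measure lebesgue B"
  define mS where "mS = measure lebesgue (A + B)"
  have nn: "0 \<le> mA'" "0 \<le> mB'" "0 \<le> mS" by (auto simp: mA'_def mB'_def mS_def)
  have p1: "0 \<le> (da + db) / da" "0 \<le> (da + db) / db" using da db by auto
  have c1: "ennreal ((da + db) / da) * ennreal mA' = ennreal ((da + db) / da * mA')"
    by (rule ennreal_mult[symmetric]) (use p1 nn in auto)
  have c2: "ennreal ((da + db) / db) * ennreal mB' = ennreal ((da + db) / db * mB')"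
    by (rule ennreal_mult[symmetric]) (use p1 nn in auto)
  have c3: "ennreal ((da + db) / da * mA') + ennreal ((da + db) / db * mB') = ennreal ((da + db) / da * mA' + (da + db) / db * mB')"
    by (rule ennreal_plus[symmetric]) (use nn da db in \<open>auto intro!: divide_nonneg_pos mult_nonneg_nonneg\<close>)
  have "ennreal ((da + db) / da * mA' + (da + db) / db * mB') \<le> ennreal mS"
    using F unfolding emeas_compact[OF A(1)] emeas_compact[OF B(1)] emeas_compact[OF cS]
      mA'_def[symmetric] mB'_def[symmetric] mS_def[symmetric] c1 c2 c3 .
  hence le: "(da + db) / da * mA' + (da + db) / db * mB' \<le> mS" using nn(3) by (rule ennreal_le_iff[THEN iffD1, rotated])
  have "(da + db) / da * mA' = mA' + (db / da) * mA'" using da by (simp add: field_simps)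
  moreover have "(db / da) * mA' > 0" using da db mA unfolding mA'_def by simp
  moreover have "(da + db) / db * mB' = mB' + (da / db) * mB'" using db by (simp add: field_simps)
  moreover have "(da / db) * mB' \<ge> 0" using da db nn by simp
  ultimately show ?thesis using le unfolding mA'_def mB'_def mS_def by linarith
qed



definition sw :: "real \<times> real \<Rightarrow> real \<times> real" where "sw = (\<lambda>(x,y). (y,x))"

lemma sw_sw[simp]: "sw (sw z) = z" by (cases z) (simp add: sw_def)

lemma sw_image_vimage: "sw ` S = sw -` S"
  by (auto simp: image_iff) (metis sw_sw)

lemma linear_sw: "linear sw"
  by (intro linearI) (auto simp: sw_def split: prod.splits)

lemma sw_add: "sw (x + y) = sw x + sw y" by (cases x, cases y) (simp add: sw_def)

lemma sw_plus: "sw ` (A + B) = sw ` A + sw ` B"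
proof -
  have "sw ` (A + B) = {sw (a + b) | a b. a \<in> A \<and> b \<in> B}" unfolding set_plus_def by blast
  also have "\<dots> = {sw a + sw b | a b. a \<in> A \<and> b \<in> B}" by (simp add: sw_add)
  also have "\<dots> = sw ` A + sw ` B" unfolding set_plus_def by blast
  finally show ?thesis .
qed

lemma sw_alt: "sw = (\<lambda>z. (snd z, fst z))" by (auto simp: sw_def fun_eq_iff)

lemma compact_sw: "compact S \<Longrightarrow> compact (sw ` S)"
proof -
  assume "compact S"
  moreover have "continuous_on S (\<lambda>z::real\<times>real. (snd z, fst z))" by (intro continuous_intros)
  ultimately show ?thesis unfolding sw_alt using compact_continuous_image by blast
qed

lemma measure_sw:
  assumes S: "compact S"
  shows "measure lebesgue (sw ` S) = measure lebesgue S"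
proof -
  have eq: "lborel \<Otimes>\<^sub>M lborel = distr (lborel \<Otimes>\<^sub>M lborel) (lborel \<Otimes>\<^sub>M lborel) (\<lambda>(x,y). (y,x)) "
    by (rule lborel_pair.distr_pair_swap)
  have Sb: "S \<in> sets (lborel \<Otimes>\<^sub>M lborel :: (real \<times> real) measure)"
    by (subst lborel_prod, simp add: borel_compact S)
  have "emeasure lborel S = emeasure (lborel \<Otimes>\<^sub>M lborel :: (real \<times> real) measure) S"
    by (simp add: lborel_prod)
  also have "\<dots> = emeasure (distr (lborel \<Otimes>\<^sub>M lborel) (lborel \<Otimes>\<^sub>M lborel :: (real \<times> real) measure) (\<lambda>(x,y). (y,x))) S"
    using eq by metis
  also have "\<dots> = emeasure (lborel \<Otimes>\<^sub>M lborel) ((\<lambda>(x,y). (y,x)) -` S \<inter> space (lborel \<Otimes>\<^sub>M lborel))"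
    by (rule emeasure_distr[OF measurable_pair_swap' Sb])
  also have "\<dots> = emeasure lborel (sw -` S)"
    by (simp add: lborel_prod sw_def)
  also have "\<dots> = emeasure lborel (sw ` S)"
    by (simp only: sw_image_vimage)
  finally have "emeasure lborel (sw ` S) = emeasure lborel S" by simp
  thus ?thesis using emeas_compact[OF S] emeas_compact[OF compact_sw[OF S]] by simp
qed

lemma strict_gen:
  fixes A B :: "(real \<times> real) set"
  assumes A: "compact A" "convex A" "0 \<in> A" and B: "compact B" "convex B" "0 \<in> B"
    and mA: "measure lebesgue A > 0" and b: "b \<in> B" "b \<noteq> 0"
  shows "measure lebesgue A + measure lebesgue B < measure lebesgue (A + B)"
proof (cases "fst b = 0")
  case False thus ?thesis using strict_x[OF A B mA b(1)] by blast
next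
  case True
  hence "snd b \<noteq> 0" using b(2) by (simp add: prod_eq_iff zero_prod_def)
  hence "fst (sw b) \<noteq> 0" by (cases b) (simp add: sw_def)
  moreover have "sw 0 = 0" by (simp add: sw_def zero_prod_def)
  ultimately have "measure lebesgue (sw ` A) + measure lebesgue (sw ` B) < measure lebesgue (sw ` A + sw ` B)"
    using A B mA b
    by (intro strict_x[where b="sw b"]) (auto simp: compact_sw convex_linear_image linear_sw measure_sw)
  thus ?thesis
    unfolding sw_plus[symmetric] using A B by (simp add: measure_sw compact_set_plus)
qed

lemma geo_ineq:
  fixes A B :: "(real \<times> real) set"
  assumes A: "compact A" "convex A" "0 \<in> A" "A \<noteq> {0}" and B: "compact B" "convex B" "0 \<in> B" "B \<noteq> {0}"
  shows "measure lebesgue A + measure lebesgue B \<le> measure lebesgue (A + B)"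
    and "measure lebesgue (A + B) = measure lebesgue A + measure lebesgue B \<Longrightarrow>
         \<exists>a. a \<noteq> 0 \<and> A \<subseteq> {x. inner a x = 0} \<and> B \<subseteq> {x. inner a x = 0}"
proof -
  obtain b where b: "b \<in> B" "b \<noteq> 0" using B(3,4) by blast
  obtain a where a: "a \<in> A" "a \<noteq> 0" using A(3,4) by blast
  have cS: "compact (A + B)" using A B by (intro compact_set_plus) auto
  have BA: "B + A = A + B" by (rule add.commute)
  have AS: "A \<subseteq> A + B" using B(3) by (metis add.right_neutral set_plus_intro subsetI)
  have BS: "B \<subseteq> A + B" using A(3) by (metis add.left_neutral set_plus_intro subsetI)
  have strictA: "measure lebesgue A > 0 \<Longrightarrow> measure lebesgue A + measure lebesgue B < measure lebesgue (A + B)"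
    using strict_gen[OF A(1-3) B(1-3) _ b] by blast
  have strictB: "measure lebesgue B > 0 \<Longrightarrow> measure lebesgue A + measure lebesgue B < measure lebesgue (A + B)"
    using strict_gen[OF B(1-3) A(1-3) _ a] BA by simp
  have zero: "measure lebesgue A = 0 \<and> measure lebesgue B = 0"
    if "\<not> measure lebesgue A + measure lebesgue B < measure lebesgue (A + B)"
    using strictA strictB that measure_nonneg[of lebesgue A] measure_nonneg[of lebesgue B] by linarith
  show "measure lebesgue A + measure lebesgue B \<le> measure lebesgue (A + B)"
  proof (cases "measure lebesgue A + measure lebesgue B < measure lebesgue (A + B)")
    case False
    thus ?thesis using zero measure_nonneg[of lebesgue "A + B"] by simp
  qed simp
  assume eq: "measure lebesgue (A + B) = measure lebesgue A + measure lebesgue B"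
  hence z: "measure lebesgue A = 0 \<and> measure lebesgue B = 0" using zero by simp
  hence "measure lebesgue (A + B) = 0" using eq by simp
  hence "negligible (A + B)" using cS by (simp add: negligible_iff_measure0 lmeasurable_compact)
  moreover have cvS: "convex (A + B)" using A B by (intro convex_set_plus) auto
  ultimately have "interior (A + B) = {}" using negligible_convex_interior by blast
  moreover have "0 \<in> A + B" using A(3) B(3) by (metis add.right_neutral set_plus_intro)
  ultimately obtain c d where cd: "c \<noteq> 0" "A + B \<subseteq> {x. inner c x = d}"
    using empty_interior_subset_hyperplane_aux[OF cvS] by blast
  have "d = 0" using cd(2) \<open>0 \<in> A + B\<close> by force
  thus "\<exists>a. a \<noteq> 0 \<and> A \<subseteq> {x. inner a x = 0} \<and> B \<subseteq> {x. inner a x = 0}"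
    using cd AS BS by blast
qed



lemma span1: "span {v::real\<times>real} = range (\<lambda>k. k *\<^sub>R v)"
  by (rule span_singleton)

lemma hyper_span:
  fixes a :: "real \<times> real"
  assumes "a \<noteq> 0"
  shows "(-snd a, fst a) \<noteq> 0" "{x. inner a x = 0} \<subseteq> span {(-snd a, fst a)}"
proof -
  obtain a1 a2 where a: "a = (a1, a2)" by (cases a)
  show "(-snd a, fst a) \<noteq> 0" using assms a by (auto simp: zero_prod_def)
  show "{x. inner a x = 0} \<subseteq> span {(-snd a, fst a)}"
  proof
    fix x assume "x \<in> {x. inner a x = 0}"
    then obtain x1 x2 where x: "x = (x1,x2)" "a1 * x1 + a2 * x2 = 0" using a by (cases x) auto
    show "x \<in> span {(-snd a, fst a)}"
    proof (cases "a1 = 0")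
      case True
      hence "a2 \<noteq> 0" using assms a by (auto simp: zero_prod_def)
      hence "x2 = 0" using x True by simp
      hence "x = (-x1/a2) *\<^sub>R (-snd a, fst a)" using x a True \<open>a2 \<noteq> 0\<close> by simp
      thus ?thesis unfolding span1 by blast
    next
      case False
      have "x1 = - a2 * x2 / a1" using x False by (simp add: field_simps) 
      hence "x = (x2/a1) *\<^sub>R (-snd a, fst a)" using x a False by simp
      thus ?thesis unfolding span1 by blast
    qed
  qed
qed

lemma span_negligible:
  fixes v :: "real \<times> real"
  assumes "v \<noteq> 0" "S \<subseteq> span {v}"
  shows "measure lebesgue S = 0"
proof -
  have "span {v} \<subseteq> {x. inner (-snd v, fst v) x = 0}"
    unfolding span1 by (cases v) (auto simp: algebra_simps)
  moreover have "negligible {x. inner (-snd v, fst v) x = 0}"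
    by (rule negligible_hyperplane) (use assms(1) in \<open>cases v; auto simp: zero_prod_def\<close>)
  ultimately have "negligible S" using assms(2) negligible_subset by blast
  thus ?thesis by (rule negligible_imp_measure0)
qed

lemma seg:
  fixes A :: "(real \<times> real) set"
  assumes A: "compact A" "convex A" "A \<noteq> {}" and v: "v \<noteq> 0" and sub: "A \<subseteq> span {v}"
  shows "\<exists>p q. A = closed_segment p q"
proof -
  define phi where "phi x = inner x v / inner v v" for x
  have lin: "linear phi" unfolding phi_def
    by (intro linearI) (simp_all add: inner_add_left add_divide_distrib)
  have vv: "inner v v \<noteq> 0" using v by simp
  define T where "T = phi ` A"
  have "compact T" unfolding T_def using A(1) lin
    by (intro compact_continuous_image linear_continuous_on) (simp_all add: linear_conv_bounded_linear)
  moreover have "connected T" unfolding T_def using A(2) lin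
    by (intro convex_connected convex_linear_image) auto
  ultimately obtain c e where ce: "T = {c..e}" using connected_compact_interval_1 by blast
  have "T \<noteq> {}" using A(3) by (simp add: T_def)
  hence cle: "c \<le> e" using ce by auto
  have bk: "x = phi x *\<^sub>R v" if xA: "x \<in> A" for x
  proof -
    obtain k where "x = k *\<^sub>R v" using sub xA unfolding span1 by blast
    thus ?thesis using vv by (simp add: phi_def)
  qed
  have "A = (\<lambda>t. t *\<^sub>R v) ` T"
  proof
    show "A \<subseteq> (\<lambda>t. t *\<^sub>R v) ` T" using bk unfolding T_def by blast
    show "(\<lambda>t. t *\<^sub>R v) ` T \<subseteq> A" unfolding T_def using bk by auto
  qed
  also have "\<dots> = closed_segment (c *\<^sub>R v) (e *\<^sub>R v)"
    unfolding ce using cle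
    by (subst closed_segment_linear_image[of "\<lambda>t. t *\<^sub>R v"])
       (auto intro: linearI simp: scaleR_add_left closed_segment_eq_real_ivl)
  finally show ?thesis by blast
qed



lemma newton_props: "compact (newton_inf f)" "convex (newton_inf f)" "0 \<in> newton_inf f"
  unfolding newton_inf_emb
  by (auto intro!: finite_imp_compact_convex_hull hull_inc simp: finite_supp2)

lemma newton_ne0:
  assumes "quasi_convenient f" shows "newton_inf f \<noteq> {0}"
proof -
  obtain p where p: "p \<in> supp2 f" "fst p + snd p > 0"
    using assms unfolding quasi_convenient_def pos_degree2_def by auto
  have "emb p \<in> newton_inf f" unfolding newton_inf_emb using p by (intro hull_inc) auto
  moreover have "emb p \<noteq> 0" using p(2) by (auto simp: emb_def zero_prod_def)
  ultimately show ?thesis by blast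
qed

theorem lemma3p2:
  fixes f g :: cpoly2
  assumes "quasi_convenient f" and "quasi_convenient g"
  shows "nu_inf f g \<ge> 0 \<and>
    (nu_inf f g = 0 \<longleftrightarrow>
      (\<exists>v :: real \<times> real. v \<noteq> 0 \<and>
         newton_inf f \<subseteq> span {v} \<and> newton_inf g \<subseteq> span {v} \<and>
         (\<exists>p q. newton_inf f = closed_segment p q) \<and>
         (\<exists>p q. newton_inf g = closed_segment p q)))"
proof -
  define A where "A = newton_inf f"
  define B where "B = newton_inf g"
  have A: "compact A" "convex A" "0 \<in> A" "A \<noteq> {0}"
    unfolding A_def using newton_props newton_ne0[OF assms(1)] by auto
  have B: "compact B" "convex B" "0 \<in> B" "B \<noteq> {0}"
    unfolding B_def using newton_props newton_ne0[OF assms(2)] by auto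
  have cS: "compact (A + B)" using A B by (intro compact_set_plus) auto
  have D: "newton_inf (f*g) = A + B" unfolding A_def B_def using assms by (rule newton_mult_eq)
  have nu: "nu_inf f g = measure lebesgue (A + B) - measure lebesgue A - measure lebesgue B"
    unfolding nu_inf_def area_def D A_def[symmetric] B_def[symmetric]
    using lb_leb[OF cS] lb_leb[OF A(1)] lb_leb[OF B(1)] by simp
  note gi = geo_ineq[OF A B]
  have ge: "nu_inf f g \<ge> 0" using gi(1) nu by simp
  have iff: "nu_inf f g = 0 \<longleftrightarrow>
      (\<exists>v :: real \<times> real. v \<noteq> 0 \<and> A \<subseteq> span {v} \<and> B \<subseteq> span {v} \<and>
         (\<exists>p q. A = closed_segment p q) \<and> (\<exists>p q. B = closed_segment p q))"
  proof
    assume "nu_inf f g = 0"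
    hence "measure lebesgue (A + B) = measure lebesgue A + measure lebesgue B" using nu by simp
    then obtain a where a: "a \<noteq> 0" "A \<subseteq> {x. inner a x = 0}" "B \<subseteq> {x. inner a x = 0}"
      using gi(2) by blast
    define v where "v = (-snd a, fst a)"
    have v: "v \<noteq> 0" "{x. inner a x = 0} \<subseteq> span {v}" using hyper_span[OF a(1)] by (auto simp: v_def)
    have As: "A \<subseteq> span {v}" and Bs: "B \<subseteq> span {v}" using a v by auto
    have "\<exists>p q. A = closed_segment p q" using seg[OF A(1,2) _ v(1) As] A(3) by blast
    moreover have "\<exists>p q. B = closed_segment p q" using seg[OF B(1,2) _ v(1) Bs] B(3) by blast
    ultimately show "\<exists>v :: real \<times> real. v \<noteq> 0 \<and> A \<subseteq> span {v} \<and> B \<subseteq> span {v} \<and>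
         (\<exists>p q. A = closed_segment p q) \<and> (\<exists>p q. B = closed_segment p q)"
      using v As Bs by blast
  next
    assume "\<exists>v :: real \<times> real. v \<noteq> 0 \<and> A \<subseteq> span {v} \<and> B \<subseteq> span {v} \<and>
         (\<exists>p q. A = closed_segment p q) \<and> (\<exists>p q. B = closed_segment p q)"
    then obtain v :: "real \<times> real" where v: "v \<noteq> 0" "A \<subseteq> span {v}" "B \<subseteq> span {v}" by blast
    have "A + B \<subseteq> span {v}"
    proof
      fix z assume "z \<in> A + B"
      then obtain x y where "x \<in> A" "y \<in> B" "z = x + y" unfolding set_plus_def by blast
      thus "z \<in> span {v}" using v by (auto intro: span_add)
    qed
    hence "measure lebesgue (A + B) = 0" using span_negligible[OF v(1)] by blast
    moreover have "measure lebesgue A = 0" "measure lebesgue B = 0"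
      using span_negligible[OF v(1)] v(2,3) by blast+
    ultimately show "nu_inf f g = 0" using nu by simp
  qed
  show ?thesis using ge iff unfolding A_def B_def by blast
qed

end
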